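(* Let $f_1,f_2:\mathbb R^d\to\mathbb R$ be convex with $\nabla f_i$ globally Lipschitz continuous with modulus $L_i>0$ ($i=1,2$), let $f_3:\mathbb R^d\to\mathbb R\cup\{+\infty\}$ be proper and lower semicontinuous, and assume $\varphi:=f_1+f_2+f_3$ has a nonempty set of minimizers. Let $\gamma\in(0,\frac{1}{L_1+L_2})$ and $\lambda,\alpha>0$. Given $(z_1,z_2)\in\mathbb R^d\times\mathbb R^d$, let $x_1=\mathrm{prox}_{\gamma f_1}(z_1)$, $x_2=\mathrm{prox}_{\frac{\gamma}{\alpha}f_2}(\frac{z_2}{\alpha}+x_1)$ and $x_3\in\mathrm{prox}_{\gamma f_3}(x_1-z_1+x_2-z_2)$. Then: (i) with $\gamma_1=\gamma/\alpha$ and $\gamma_2=\gamma/(1-\alpha)$, $$\varphi_\gamma^{\mathrm{Ryu}}(z_1,z_2)\le\min\Big\{\varphi(x_1)+\tfrac12\big(L_2+\tfrac{1}{\gamma_2}\big)\|x_1-x_2\|^2,\ \varphi(x_2)+\tfrac12\big(L_1+\tfrac{1}{\gamma_1}\big)\|x_1-x_2\|^2\Big\};$$ (ii) $\varphi_\gamma^{\mathrm{Ryu}}(z_1,z_2)\ge\varphi(x_3)+\frac{\alpha-\gamma L_1}{2\gamma}\|x_3-x_1\|^2+\frac{(1-\alpha)-\gamma L_2}{2\gamma}\|x_3-x_2\|^2$; (iii) if $\alpha\in(0,1)$ and $\gamma\le\min\{\frac{\alpha}{L_1},\frac{1-\alpha}{L_2}\}$, then $\varphi_\gamma^{\mathr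m{Ryu}}(z_1,z_2)\ge\varphi(x_3)$.
   Context: For $h:\mathbb R^d\to\mathbb R\cup\{+\infty\}$ and $\gamma>0$, $\mathrm{prox}_{\gamma h}(z):=\operatorname{argmin}_{y}\{h(y)+\frac{1}{2\gamma}\|y-z\|^2\}$. Conventions $\frac{c}{0}=\infty$, $\frac{d}{\infty}=0$ ($c>0,d\in\mathbb R$). With $x_1,x_2$ as in the claim and $\gamma_1=\gamma/\alpha$, $\gamma_2=\gamma/(1-\alpha)$, the relaxed Ryu envelope is $$\varphi_\gamma^{\mathrm{Ryu}}(z_1,z_2):=\min_{y\in\mathbb R^d}\Big\{f_3(y)+\sum_{i=1}^2\Big[f_i(x_i)+\langle y-x_i,\nabla f_i(x_i)\rangle+\frac{1}{2\gamma_i}\|y-x_i\|^2\Big]\Big\}.$$ *)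

theory Defs
  imports "HOL-Analysis.Analysis" "HOL-Library.Extended_Real"
begin

definition proper_fun :: "('a \<Rightarrow> ereal) \<Rightarrow> bool" where
  "proper_fun h \<longleftrightarrow> (\<exists>x. h x \<noteq> \<infinity>) \<and> (\<forall>x. h x \<noteq> -\<infinity>)"

definition lsc_fun :: "('a::topological_space \<Rightarrow> ereal) \<Rightarrow> bool" where
  "lsc_fun h \<longleftrightarrow> (\<forall>x. h x \<le> Liminf (at x) h)"

definition prox_set :: "('a::real_normed_vector \<Rightarrow> ereal) \<Rightarrow> real \<Rightarrow> 'a \<Rightarrow> 'a set" where
  "prox_set h \<gamma> z = {y. \<forall>u. h y + ereal ((norm (y - z))\<^sup>2 / (2 * \<gamma>))
                            \<le> h u + ereal ((norm (u - z))\<^sup>2 / (2 * \<gamma>))}"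

text \<open>Relaxed Ryu envelope evaluated with given points \<open>x1, x2\<close> and gradients \<open>g1, g2\<close>.
  Here \<open>1/\<gamma>1 = \<alpha>/\<gamma>\<close> and \<open>1/\<gamma>2 = (1-\<alpha>)/\<gamma>\<close> (consistent with the conventions c/0 = \<infinity>, d/\<infinity> = 0).
  The minimum is rendered as an infimum in ereal.\<close>
definition ryu_env ::
  "('a::real_inner \<Rightarrow> real) \<Rightarrow> ('a \<Rightarrow> real) \<Rightarrow> ('a \<Rightarrow> ereal) \<Rightarrow> ('a \<Rightarrow> 'a) \<Rightarrow> ('a \<Rightarrow> 'a)
    \<Rightarrow> real \<Rightarrow> real \<Rightarrow> 'a \<Rightarrow> 'a \<Rightarrow> ereal" where
  "ryu_env f1 f2 f3 g1 g2 \<gamma> \<alpha> x1 x2 =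
     (INF y. f3 y
        + ereal (f1 x1 + (y - x1) \<bullet> g1 x1 + (\<alpha> / \<gamma>) / 2 * (norm (y - x1))\<^sup>2)
        + ereal (f2 x2 + (y - x2) \<bullet> g2 x2 + ((1 - \<alpha>) / \<gamma>) / 2 * (norm (y - x2))\<^sup>2))"

end

theory Submission imports Defs begin

lemma line_deriv:
  fixes f :: "'a::real_inner \<Rightarrow> real"
  assumes "\<And>x. (f has_derivative (\<lambda>h. g x \<bullet> h)) (at x)"
  shows "((\<lambda>t. f (x + t *\<^sub>R d)) has_real_derivative (g (x + t *\<^sub>R d) \<bullet> d)) (at t)"
proof -
  have l: "((\<lambda>t. x + t *\<^sub>R d) has_derivative (\<lambda>s. s *\<^sub>R d)) (at t)"
    by (auto intro!: derivative_eq_intros)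
  have "((\<lambda>t. f (x + t *\<^sub>R d)) has_derivative (\<lambda>s. g (x + t *\<^sub>R d) \<bullet> (s *\<^sub>R d))) (at t)"
    using has_derivative_compose[OF l assms[of "x + t *\<^sub>R d"]] by simp
  moreover have "(\<lambda>s. g (x + t *\<^sub>R d) \<bullet> (s *\<^sub>R d)) = (*) (g (x + t *\<^sub>R d) \<bullet> d)"
    by (auto simp: fun_eq_iff)
  ultimately show ?thesis unfolding has_field_derivative_def by simp
qed

lemma descent:
  fixes f :: "'a::real_inner \<Rightarrow> real"
  assumes d: "\<And>x. (f has_derivative (\<lambda>h. g x \<bullet> h)) (at x)"
    and lip: "L-lipschitz_on UNIV g"
  shows "f y \<le> f x + (y - x) \<bullet> g x + L / 2 * (norm (y - x))\<^sup>2"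
proof -
  define d where "d = y - x"
  define \<phi> where "\<phi> t = f (x + t *\<^sub>R d) - t * (g x \<bullet> d) - L / 2 * t\<^sup>2 * (norm d)\<^sup>2" for t
  have "\<phi> 1 \<le> \<phi> 0"
  proof (rule DERIV_nonpos_imp_nonincreasing[where f=\<phi>])
    fix t :: real assume t: "0 \<le> t" "t \<le> 1"
    have D: "(\<phi> has_real_derivative (g (x + t *\<^sub>R d) \<bullet> d - g x \<bullet> d - L / 2 * (2 * t) * (norm d)\<^sup>2)) (at t)"
      unfolding \<phi>_def
      by (auto intro!: derivative_eq_intros line_deriv[OF d])
    have "(g (x + t *\<^sub>R d) - g x) \<bullet> d \<le> norm (g (x + t *\<^sub>R d) - g x) * norm d"
      by (rule norm_cauchy_schwarz)
    also have "norm (g (x + t *\<^sub>R d) - g x) \<le> L * dist (x + t *\<^sub>R d) x"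
      using lip unfolding dist_norm[symmetric] by (auto dest: lipschitz_onD)
    hence "norm (g (x + t *\<^sub>R d) - g x) * norm d \<le> L * dist (x + t *\<^sub>R d) x * norm d"
      by (simp add: mult_right_mono)
    also have "L * dist (x + t *\<^sub>R d) x * norm d = L * t * (norm d)\<^sup>2"
      using t by (simp add: dist_norm power2_eq_square)
    finally have "(g (x + t *\<^sub>R d) - g x) \<bullet> d \<le> L * t * (norm d)\<^sup>2" .
    hence "g (x + t *\<^sub>R d) \<bullet> d - g x \<bullet> d - L / 2 * (2 * t) * (norm d)\<^sup>2 \<le> 0"
      by (simp add: inner_diff_left)
    with D show "\<exists>y. DERIV \<phi> t :> y \<and> y \<le> 0" by blast
  qed simp
  moreover have "\<phi> 1 = f y - (y - x) \<bullet> g x - L / 2 * (norm (y - x))\<^sup>2"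
    unfolding \<phi>_def d_def by (simp add: inner_commute)
  moreover have "\<phi> 0 = f x" unfolding \<phi>_def by simp
  ultimately show ?thesis by linarith
qed

lemma tangent:
  fixes f :: "'a::real_inner \<Rightarrow> real"
  assumes d: "\<And>x. (f has_derivative (\<lambda>h. g x \<bullet> h)) (at x)"
    and cv: "convex_on UNIV f"
  shows "f x + (y - x) \<bullet> g x \<le> f y"
proof -
  define d where "d = y - x"
  define \<phi> where "\<phi> = (\<lambda>t. f (x + t *\<^sub>R d))"
  have c: "convex_on UNIV \<phi>"
  proof (rule convex_onI)
    fix t u v :: real assume t: "0 < t" "t < 1"
    have "x + ((1 - t) *\<^sub>R u + t *\<^sub>R v) *\<^sub>R d = (1 - t) *\<^sub>R (x + u *\<^sub>R d) + t *\<^sub>R (x + v *\<^sub>R d)"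
      by (simp add: algebra_simps)
    thus "\<phi> ((1 - t) *\<^sub>R u + t *\<^sub>R v) \<le> (1 - t) * \<phi> u + t * \<phi> v"
      unfolding \<phi>_def using convex_onD[OF cv, of t "x + u *\<^sub>R d" "x + v *\<^sub>R d"] t by simp
  qed simp
  have "\<phi> 1 - \<phi> 0 \<ge> (g (x + 0 *\<^sub>R d) \<bullet> d) * (1 - 0)"
    by (rule convex_on_imp_above_tangent[OF c, where f'="g (x + 0 *\<^sub>R d) \<bullet> d"]) (use line_deriv[OF d, of x d 0] in \<open>auto simp: \<phi>_def\<close>)
  thus ?thesis by (simp add: \<phi>_def d_def inner_commute)
qed

lemma prox_grad:
  fixes f :: "'a::real_inner \<Rightarrow> real"
  assumes d: "\<And>x. (f has_derivative (\<lambda>h. g x \<bullet> h)) (at x)"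
    and t: "t > 0" and x: "x \<in> prox_set (\<lambda>x. ereal (f x)) t z"
  shows "g x = (1 / t) *\<^sub>R (z - x)"
proof -
  define h where "h = (\<lambda>y. f y + inverse (2 * t) * ((y - z) \<bullet> (y - z)))"
  have hh: "h y = f y + (norm (y - z))\<^sup>2 / (2 * t)" for y
  proof -
    have "(y - z) \<bullet> (y - z) = (norm (y - z))\<^sup>2" by (rule power2_norm_eq_inner[symmetric])
    thus ?thesis unfolding h_def by (simp only: divide_inverse_commute)
  qed
  have "\<forall>u. f x + (norm (x - z))\<^sup>2 / (2 * t) \<le> f u + (norm (u - z))\<^sup>2 / (2 * t)"
    using x by (simp add: prox_set_def)
  hence min: "\<forall>y\<in>UNIV. h x \<le> h y" by (simp add: hh)
  have D: "(h has_derivative (\<lambda>v. g x \<bullet> v + inverse (2 * t) * (v \<bullet> (x - z) + (x - z) \<bullet> v))) (at x)"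
    unfolding h_def by (auto intro!: derivative_eq_intros d)
  have "(\<lambda>v. g x \<bullet> v + inverse (2 * t) * (v \<bullet> (x - z) + (x - z) \<bullet> v)) = (\<lambda>v. 0)"
    by (rule differential_zero_maxmin[OF _ _ D, of UNIV]) (use min in auto)
  hence "\<And>v. g x \<bullet> v + inverse (2 * t) * (v \<bullet> (x - z) + (x - z) \<bullet> v) = 0" by metis
  hence "\<And>v. (g x - (1 / t) *\<^sub>R (z - x)) \<bullet> v = 0"
  proof -
    fix v
    assume H: "\<And>v. g x \<bullet> v + inverse (2 * t) * (v \<bullet> (x - z) + (x - z) \<bullet> v) = 0"
    have "(g x - (1 / t) *\<^sub>R (z - x)) \<bullet> v = g x \<bullet> v + inverse (2 * t) * (v \<bullet> (x - z) + (x - z) \<bullet> v)"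
    proof -
      have e1: "v \<bullet> (x - z) = (x - z) \<bullet> v" by (rule inner_commute)
      have e2: "(x - z) \<bullet> v = - ((z - x) \<bullet> v)" by (simp add: inner_diff_left)
      have e3: "(g x - (1 / t) *\<^sub>R (z - x)) \<bullet> v = g x \<bullet> v - (1 / t) * ((z - x) \<bullet> v)"
        by (simp add: inner_diff_left)
      show ?thesis unfolding e3 e1 e2 using t by (simp add: field_simps)
    qed
    thus "(g x - (1 / t) *\<^sub>R (z - x)) \<bullet> v = 0" using H by simp
  qed
  from this[of "g x - (1 / t) *\<^sub>R (z - x)"] show ?thesis by simp
qed

lemma ereal_rearr: "ereal a + (F::ereal) + ereal b = F + ereal (a + b)"
proof -
  have e: "ereal (a + b) = ereal a + ereal b" by simp
  show ?thesis unfolding e by (simp only: add.assoc add.commute add.left_commute)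
qed

lemma quad:
  fixes u w1 w2 G1 G2 :: "'a::real_inner"
  assumes "\<gamma> \<noteq> 0"
  shows "A + (u + w1) \<bullet> G1 + a / \<gamma> / 2 * (norm (u + w1))\<^sup>2 + (B + (u + w2) \<bullet> G2 + b / \<gamma> / 2 * (norm (u + w2))\<^sup>2)
    = (A + w1 \<bullet> G1 + a / \<gamma> / 2 * (norm w1)\<^sup>2 + (B + w2 \<bullet> G2 + b / \<gamma> / 2 * (norm w2)\<^sup>2))
      + u \<bullet> (G1 + G2 + (a / \<gamma>) *\<^sub>R w1 + (b / \<gamma>) *\<^sub>R w2) + (a + b) / (2 * \<gamma>) * (norm u)\<^sup>2"
proof -
  have n1: "(norm (u + w1))\<^sup>2 = (norm u)\<^sup>2 + 2 * (u \<bullet> w1) + (norm w1)\<^sup>2"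
    using dot_norm[of u w1] by (simp add: field_simps)
  have n2: "(norm (u + w2))\<^sup>2 = (norm u)\<^sup>2 + 2 * (u \<bullet> w2) + (norm w2)\<^sup>2"
    using dot_norm[of u w2] by (simp add: field_simps)
  have i: "u \<bullet> (G1 + G2 + (a / \<gamma>) *\<^sub>R w1 + (b / \<gamma>) *\<^sub>R w2)
     = u \<bullet> G1 + u \<bullet> G2 + (a / \<gamma>) * (u \<bullet> w1) + (b / \<gamma>) * (u \<bullet> w2)"
    by (simp add: inner_add_right)
  have j: "(u + w1) \<bullet> G1 = u \<bullet> G1 + w1 \<bullet> G1" "(u + w2) \<bullet> G2 = u \<bullet> G2 + w2 \<bullet> G2"
    by (simp_all add: inner_add_left)
  show ?thesis unfolding n1 n2 i j using assms by (simp add: field_simps)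
qed

theorem proposition3:
  fixes f1 f2 :: "'a::euclidean_space \<Rightarrow> real"
    and g1 g2 :: "'a \<Rightarrow> 'a"
    and f3 :: "'a \<Rightarrow> ereal"
    and L1 L2 \<gamma> \<alpha> :: real
    and z1 z2 x1 x2 x3 :: 'a
  assumes f1_convex: "convex_on UNIV f1" and f2_convex: "convex_on UNIV f2"
    and g1_grad: "\<And>x. (f1 has_derivative (\<lambda>h. g1 x \<bullet> h)) (at x)"
    and g2_grad: "\<And>x. (f2 has_derivative (\<lambda>h. g2 x \<bullet> h)) (at x)"
    and L1_pos: "L1 > 0" and L2_pos: "L2 > 0"
    and g1_lip: "L1-lipschitz_on UNIV g1" and g2_lip: "L2-lipschitz_on UNIV g2"
    and f3_proper: "proper_fun f3" and f3_lsc: "lsc_fun f3"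
    and minimizer: "\<exists>xs. \<forall>y. ereal (f1 xs + f2 xs) + f3 xs \<le> ereal (f1 y + f2 y) + f3 y"
    and gamma_pos: "\<gamma> > 0" and gamma_bound: "\<gamma> < 1 / (L1 + L2)"
    and alpha_pos: "\<alpha> > 0"
    and x1_def: "x1 \<in> prox_set (\<lambda>x. ereal (f1 x)) \<gamma> z1"
    and x2_def: "x2 \<in> prox_set (\<lambda>x. ereal (f2 x)) (\<gamma> / \<alpha>) (z2 /\<^sub>R \<alpha> + x1)"
    and x3_def: "x3 \<in> prox_set f3 \<gamma> (x1 - z1 + x2 - z2)"
  shows "ryu_env f1 f2 f3 g1 g2 \<gamma> \<alpha> x1 x2
           \<le> min (ereal (f1 x1 + f2 x1) + f3 x1
                   + ereal (1/2 * (L2 + (1 - \<alpha>) / \<gamma>) * (norm (x1 - x2))\<^sup>2))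
                 (ereal (f1 x2 + f2 x2) + f3 x2
                   + ereal (1/2 * (L1 + \<alpha> / \<gamma>) * (norm (x1 - x2))\<^sup>2))
       \<and> ryu_env f1 f2 f3 g1 g2 \<gamma> \<alpha> x1 x2
           \<ge> ereal (f1 x3 + f2 x3) + f3 x3
             + ereal ((\<alpha> - \<gamma> * L1) / (2 * \<gamma>) * (norm (x3 - x1))\<^sup>2
                      + ((1 - \<alpha>) - \<gamma> * L2) / (2 * \<gamma>) * (norm (x3 - x2))\<^sup>2)
       \<and> ((\<alpha> < 1 \<and> \<gamma> \<le> min (\<alpha> / L1) ((1 - \<alpha>) / L2))
           \<longrightarrow> ryu_env f1 f2 f3 g1 g2 \<gamma> \<alpha> x1 x2 \<ge> ereal (f1 x3 + f2 x3) + f3 x3)"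
proof -
  define c where "c = x1 - z1 + x2 - z2"
  define Q where "Q y = f1 x1 + (y - x1) \<bullet> g1 x1 + \<alpha> / \<gamma> / 2 * (norm (y - x1))\<^sup>2
      + (f2 x2 + (y - x2) \<bullet> g2 x2 + (1 - \<alpha>) / \<gamma> / 2 * (norm (y - x2))\<^sup>2)" for y
  have envQ: "ryu_env f1 f2 f3 g1 g2 \<gamma> \<alpha> x1 x2 = (INF y. f3 y + ereal (Q y))"
    unfolding ryu_env_def Q_def by (simp add: add.assoc)
  have G1: "g1 x1 = (1 / \<gamma>) *\<^sub>R (z1 - x1)"
    by (rule prox_grad[OF g1_grad gamma_pos x1_def])
  have G2: "g2 x2 = (1 / (\<gamma> / \<alpha>)) *\<^sub>R (z2 /\<^sub>R \<alpha> + x1 - x2)"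
    using prox_grad[OF g2_grad _ x2_def] gamma_pos alpha_pos by simp
  define V where "V = g1 x1 + g2 x2 + (\<alpha> / \<gamma>) *\<^sub>R (c - x1) + ((1 - \<alpha>) / \<gamma>) *\<^sub>R (c - x2)"
  have "\<gamma> *\<^sub>R V = 0"
    using gamma_pos alpha_pos unfolding V_def G1 G2 c_def by (simp add: algebra_simps diff_divide_distrib)
  hence V0: "V = 0" using gamma_pos by simp
  have key: "Q y = Q c + (norm (y - c))\<^sup>2 / (2 * \<gamma>)" for y
  proof -
    have "Q y = Q c + (y - c) \<bullet> V + (\<alpha> + (1 - \<alpha>)) / (2 * \<gamma>) * (norm (y - c))\<^sup>2"
      using quad[of \<gamma> "f1 x1" "y - c" "c - x1" "g1 x1" \<alpha> "f2 x2" "c - x2" "g2 x2" "1 - \<alpha>"] gamma_pos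
      unfolding Q_def V_def by simp
    thus ?thesis using V0 by simp
  qed
  have prox3: "f3 x3 + ereal ((norm (x3 - c))\<^sup>2 / (2 * \<gamma>)) \<le> f3 y + ereal ((norm (y - c))\<^sup>2 / (2 * \<gamma>))" for y
    using x3_def unfolding prox_set_def c_def by auto
  have split: "f3 y + ereal (Q y) = (f3 y + ereal ((norm (y - c))\<^sup>2 / (2 * \<gamma>))) + ereal (Q c)" for y
  proof -
    have e: "ereal (Q c + (norm (y - c))\<^sup>2 / (2 * \<gamma>)) = ereal ((norm (y - c))\<^sup>2 / (2 * \<gamma>)) + ereal (Q c)"
      by simp
    show ?thesis unfolding key[of y] e by (simp only: add.assoc)
  qed
  have E3: "f3 x3 + ereal (Q x3) \<le> ryu_env f1 f2 f3 g1 g2 \<gamma> \<alpha> x1 x2"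
    unfolding envQ
  proof (rule INF_greatest)
    fix y
    show "f3 x3 + ereal (Q x3) \<le> f3 y + ereal (Q y)"
      unfolding split[of x3] split[of y] by (rule add_right_mono[OF prox3])
  qed
  define R where "R = (\<alpha> - \<gamma> * L1) / (2 * \<gamma>) * (norm (x3 - x1))\<^sup>2
                      + ((1 - \<alpha>) - \<gamma> * L2) / (2 * \<gamma>) * (norm (x3 - x2))\<^sup>2"
  have D1: "f1 x3 \<le> f1 x1 + (x3 - x1) \<bullet> g1 x1 + L1 / 2 * (norm (x3 - x1))\<^sup>2"
    by (rule descent[OF g1_grad g1_lip])
  have D2: "f2 x3 \<le> f2 x2 + (x3 - x2) \<bullet> g2 x2 + L2 / 2 * (norm (x3 - x2))\<^sup>2"
    by (rule descent[OF g2_grad g2_lip])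
  have r1: "(\<alpha> - \<gamma> * L1) / (2 * \<gamma>) * (norm (x3 - x1))\<^sup>2 = \<alpha> / \<gamma> / 2 * (norm (x3 - x1))\<^sup>2 - L1 / 2 * (norm (x3 - x1))\<^sup>2"
    using gamma_pos by (simp add: field_simps)
  have r2: "((1 - \<alpha>) - \<gamma> * L2) / (2 * \<gamma>) * (norm (x3 - x2))\<^sup>2 = (1 - \<alpha>) / \<gamma> / 2 * (norm (x3 - x2))\<^sup>2 - L2 / 2 * (norm (x3 - x2))\<^sup>2"
    using gamma_pos by (simp add: field_simps)
  have QR: "f1 x3 + f2 x3 + R \<le> Q x3"
    using D1 D2 r1 r2 unfolding R_def Q_def by linarith
  have partii: "ereal (f1 x3 + f2 x3) + f3 x3 + ereal R \<le> ryu_env f1 f2 f3 g1 g2 \<gamma> \<alpha> x1 x2"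
  proof -
    have "ereal (f1 x3 + f2 x3) + f3 x3 + ereal R = f3 x3 + ereal (f1 x3 + f2 x3 + R)"
      by (rule ereal_rearr)
    also have "\<dots> \<le> f3 x3 + ereal (Q x3)"
      using QR by (intro add_left_mono) simp
    also have "\<dots> \<le> ryu_env f1 f2 f3 g1 g2 \<gamma> \<alpha> x1 x2" by (rule E3)
    finally show ?thesis .
  qed
  have T2: "f2 x2 + (x1 - x2) \<bullet> g2 x2 \<le> f2 x1" by (rule tangent[OF g2_grad f2_convex])
  have T1: "f1 x1 + (x2 - x1) \<bullet> g1 x1 \<le> f1 x2" by (rule tangent[OF g1_grad f1_convex])
  have nsym: "norm (x2 - x1) = norm (x1 - x2)" by (rule norm_minus_commute)
  have L2n: "0 \<le> L2 / 2 * (norm (x1 - x2))\<^sup>2" using L2_pos by simp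
  have L1n: "0 \<le> L1 / 2 * (norm (x1 - x2))\<^sup>2" using L1_pos by simp
  have Qx1: "Q x1 \<le> f1 x1 + f2 x1 + 1/2 * (L2 + (1 - \<alpha>) / \<gamma>) * (norm (x1 - x2))\<^sup>2"
    using T2 L2n unfolding Q_def by (simp add: algebra_simps)
  have Qx2: "Q x2 \<le> f1 x2 + f2 x2 + 1/2 * (L1 + \<alpha> / \<gamma>) * (norm (x1 - x2))\<^sup>2"
  proof -
    have a: "Q x2 = f1 x1 + (x2 - x1) \<bullet> g1 x1 + \<alpha> / \<gamma> / 2 * (norm (x1 - x2))\<^sup>2 + f2 x2"
      unfolding Q_def nsym by simp
    have b: "1/2 * (L1 + \<alpha> / \<gamma>) * (norm (x1 - x2))\<^sup>2 = L1 / 2 * (norm (x1 - x2))\<^sup>2 + \<alpha> / \<gamma> / 2 * (norm (x1 - x2))\<^sup>2"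
      by (simp add: algebra_simps)
    show ?thesis unfolding a b using T1 L1n by linarith
  qed
  have up1: "ryu_env f1 f2 f3 g1 g2 \<gamma> \<alpha> x1 x2 \<le> ereal (f1 x1 + f2 x1) + f3 x1
                   + ereal (1/2 * (L2 + (1 - \<alpha>) / \<gamma>) * (norm (x1 - x2))\<^sup>2)"
  proof -
    have "ryu_env f1 f2 f3 g1 g2 \<gamma> \<alpha> x1 x2 \<le> f3 x1 + ereal (Q x1)"
      unfolding envQ by (rule INF_lower) simp
    also have "\<dots> \<le> f3 x1 + ereal (f1 x1 + f2 x1 + 1/2 * (L2 + (1 - \<alpha>) / \<gamma>) * (norm (x1 - x2))\<^sup>2)"
      using Qx1 by (intro add_left_mono) simp
    also have "\<dots> = ereal (f1 x1 + f2 x1) + f3 x1 + ereal (1/2 * (L2 + (1 - \<alpha>) / \<gamma>) * (norm (x1 - x2))\<^sup>2)"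
      by (rule ereal_rearr[symmetric])
    finally show ?thesis .
  qed
  have up2: "ryu_env f1 f2 f3 g1 g2 \<gamma> \<alpha> x1 x2 \<le> ereal (f1 x2 + f2 x2) + f3 x2
                   + ereal (1/2 * (L1 + \<alpha> / \<gamma>) * (norm (x1 - x2))\<^sup>2)"
  proof -
    have "ryu_env f1 f2 f3 g1 g2 \<gamma> \<alpha> x1 x2 \<le> f3 x2 + ereal (Q x2)"
      unfolding envQ by (rule INF_lower) simp
    also have "\<dots> \<le> f3 x2 + ereal (f1 x2 + f2 x2 + 1/2 * (L1 + \<alpha> / \<gamma>) * (norm (x1 - x2))\<^sup>2)"
      using Qx2 by (intro add_left_mono) simp
    also have "\<dots> = ereal (f1 x2 + f2 x2) + f3 x2 + ereal (1/2 * (L1 + \<alpha> / \<gamma>) * (norm (x1 - x2))\<^sup>2)"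
      by (rule ereal_rearr[symmetric])
    finally show ?thesis .
  qed
  have partiii: "ryu_env f1 f2 f3 g1 g2 \<gamma> \<alpha> x1 x2 \<ge> ereal (f1 x3 + f2 x3) + f3 x3"
    if h: "\<alpha> < 1 \<and> \<gamma> \<le> min (\<alpha> / L1) ((1 - \<alpha>) / L2)"
  proof -
    have "\<gamma> * L1 \<le> \<alpha>" using h L1_pos by (simp add: field_simps)
    moreover have "\<gamma> * L2 \<le> 1 - \<alpha>" using h L2_pos by (simp add: field_simps)
    ultimately have "0 \<le> R" unfolding R_def using gamma_pos
      by (intro add_nonneg_nonneg mult_nonneg_nonneg divide_nonneg_pos) auto
    hence "ereal (f1 x3 + f2 x3) + f3 x3 \<le> ereal (f1 x3 + f2 x3) + f3 x3 + ereal R"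
      using add_left_mono[of 0 "ereal R" "ereal (f1 x3 + f2 x3) + f3 x3"] by simp
    thus ?thesis using partii by (rule order_trans)
  qed
  show ?thesis using up1 up2 partii partiii unfolding R_def by auto
qed

end
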